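(* For every Gauss diagram $D$ consisting of $m>0$ signed dashed arrows (and no other arrows), there exist a fractional twist lattice $\Phi_D:\mathbb{Z}^m\to\mathscr{K}$, $\alpha\in(\mathbb{Z}_{\ge0})^m$ and $\nu\in\{+,-\}^m$ such that $I\big(\partial^{\nu\alpha}\Phi_D(\vec 0)\big)=(-1)^{\#(-)}\cdot D$, where $\#(-)$ is the number of arrows of $D$ signed $-$.
   Context: Gauss diagrams: a long virtual knot is encoded by the real line $\mathbb{R}$ with signed arrows, one for each classical crossing (arrow between the two preimages $x<y$, pointing right if the overcrossing is at $x$, left otherwise, labelled with the writhe sign); $\mathscr{D}$ is the set of such diagrams up to orientation-preserving homeomorphism of $\mathbb{R}$ and $\mathscr{K}$ the set of long virtual knots. A dashed arrow represents a semi-virtual crossing: a diagram with a dashed arrow equals the diagram with that arrow solid minus the diagram with that arrow deleted. $\mathscr{A}$ is the free abelian group generated by Gauss diagrams all of whose arrows are dashed, and $i$ makes every arrow dashed. $I:\mathbb{Z}[\mathscr{D}]\to\mathscr{A}$ is $I(D)=\sum_{D'\subset D} i(D')$, summing over all subdiagrams obtained by deleting a subset of arrows; it is an isomorphism and descends to $\mathbb{Z}[\mathscr{K}]\to\mathscr{P}$ ($\mathscr{P}$ the quotient of $\mathscr{A}$ by the Polyak relations); the equality is understood there. Discrete derivatives: for $\Phi:\mathbb{Z}^m\to\mathbb{Z}[\mathscr{K}]$, $(\partial_i^+\Phi)(z)=\Phi(z+e_i)-\Phi(z)$, $(\partial_i^-\Phi)(z)=\Phi(z)-\Phi(z-e_i)$;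 $\partial_i^{\pm a}$ is the $a$-fold iterate, $\partial^{\nu\alpha}=\partial_1^{\nu_1\alpha_1}\cdots\partial_m^{\nu_m\alpha_m}$. Fractional twist lattices: a proper pair is a pair of disjoint open intervals $A<A'$ of $\mathbb{R}$ such that every arrow with an endpoint in $A\cup A'$ has one endpoint in each. For $Y\in\{S,B\}$, $Z\in\{L,R\}$, a fractional twist sequence of type $FYZ$ with pair $(A,A')$ places at $k\in\mathbb{Z}$ exactly $|k|$ arrows with endpoints $a_1<\dots<a_{|k|}$ in $A$, $b_1<\dots<b_{|k|}$ in $A'$, arrow $i$ joining $a_i$ to $b_i$ ($Y=S$) or $b_{|k|+1-i}$ ($Y=B$), all pointing in direction $Z$ and signed $+$ if $k\ge0$, all pointing opposite to $Z$ and signed $-$ if $k<0$. A fractional twist lattice of dimension $m$ is $\Phi:\mathbb{Z}^m\to\mathscr{K}$ given by a fixed Gauss diagram $G$ and disjoint proper pairs $(A_i,A_i')$ free of endpoints of $G$, with $\Phi(k_1,\dots,k_m)$ equal to $G$ plus, in each $(A_i,A_i')$, the $k_i$-th configuration of a fractional twist sequence of some type $FYZ$. *)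

theory Defs
  imports Complex_Main "HOL-Library.Function_Algebras"
begin

text \<open>An arrow is (tail, head, sign) with endpoints on the real line;
  sign True means writhe +, False means writhe -.  The tail is the
  preimage of the overcrossing, the head that of the undercrossing.\<close>
type_synonym arrow = "real \<times> real \<times> bool"
type_synonym gd = "arrow set"

definition tl_of :: "arrow \<Rightarrow> real" where "tl_of a = fst a"
definition hd_of :: "arrow \<Rightarrow> real" where "hd_of a = fst (snd a)"
definition sg_of :: "arrow \<Rightarrow> bool" where "sg_of a = snd (snd a)"

definition ends :: "gd \<Rightarrow> real set" where
  "ends D = tl_of ` D \<union> hd_of ` D"

definition wf_gd :: "gd \<Rightarrow> bool" where
  "wf_gd D \<longleftrightarrow> finite D \<and> (\<forall>a\<in>D. tl_of a \<noteq> hd_of a) \<and>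
     (\<forall>a\<in>D. \<forall>b\<in>D. a \<noteq> b \<longrightarrow> {tl_of a, hd_of a} \<inter> {tl_of b, hd_of b} = {})"

text \<open>Equivalence up to orientation-preserving homeomorphism of the real line
  (= strictly increasing surjection).\<close>
definition gd_equiv :: "gd \<Rightarrow> gd \<Rightarrow> bool" where
  "gd_equiv D D' \<longleftrightarrow> (\<exists>h::real \<Rightarrow> real. strict_mono h \<and> surj h \<and>
      D' = (\<lambda>(t, x, s). (h t, h x, s)) ` D)"

definition no_ends_between :: "real set \<Rightarrow> real \<Rightarrow> real \<Rightarrow> bool" where
  "no_ends_between E x y \<longleftrightarrow> (\<forall>z\<in>E. \<not> (min x y < z \<and> z < max x y))"

definition reid1 :: "gd \<Rightarrow> gd \<Rightarrow> bool" where
  "reid1 D D' \<longleftrightarrow> wf_gd D' \<and> (\<exists>a. a \<notin> D \<and> D' = insert a D \<and>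
      no_ends_between (ends D) (tl_of a) (hd_of a))"

definition reid2 :: "gd \<Rightarrow> gd \<Rightarrow> bool" where
  "reid2 D D' \<longleftrightarrow> wf_gd D' \<and> (\<exists>a b. a \<notin> D \<and> b \<notin> D \<and> a \<noteq> b \<and> D' = D \<union> {a, b} \<and>
      sg_of a \<noteq> sg_of b \<and>
      no_ends_between (ends D') (tl_of a) (tl_of b) \<and>
      no_ends_between (ends D') (hd_of a) (hd_of b))"

definition pm :: "bool \<Rightarrow> int" where "pm b = (if b then 1 else -1)"
definition ordsg :: "real \<Rightarrow> real \<Rightarrow> int" where "ordsg x y = (if x < y then 1 else -1)"

text \<open>R3: three arrows TM = (p1,q1,e1), TB = (p2,q2,e2), MB = (p3,q3,e3)
  (top over middle over bottom), the endpoints lying pairwise adjacent on the three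
  strands; the move reverses the order of the endpoints on each strand.  The
  sign/order constraint is the realisability condition of the planar picture.\<close>
definition reid3 :: "gd \<Rightarrow> gd \<Rightarrow> bool" where
  "reid3 D D' \<longleftrightarrow> (\<exists>E p1 p2 p3 q1 q2 q3 e1 e2 e3.
      D = E \<union> {(p1, q1, e1), (p2, q2, e2), (p3, q3, e3)} \<and>
      D' = E \<union> {(p2, p3, e1), (p1, q3, e2), (q1, q2, e3)} \<and>
      wf_gd D \<and> wf_gd D' \<and> distinct [p1, p2, p3, q1, q2, q3] \<and>
      ends E \<inter> {p1, p2, p3, q1, q2, q3} = {} \<and>
      no_ends_between (ends D) p1 p2 \<and> no_ends_between (ends D) q1 p3 \<and>
      no_ends_between (ends D) q2 q3 \<and>
      ordsg p1 p2 * ordsg q1 p3 = pm e3 * pm e2 \<and>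
      ordsg q2 q3 * ordsg q1 p3 = pm e1 * pm e2)"

definition reid :: "gd \<Rightarrow> gd \<Rightarrow> bool" where
  "reid D D' \<longleftrightarrow> reid1 D D' \<or> reid2 D D' \<or> reid3 D D'"

text \<open>Elements of the free abelian group on diagram representatives:
  finitely supported functions gd => int.  The same carrier is used for the
  group A of dashed diagrams (i only relabels arrows as dashed).\<close>
definition gen :: "gd \<Rightarrow> gd \<Rightarrow> int" where
  "gen D = (\<lambda>E. if E = D then 1 else 0)"

definition Imap :: "(gd \<Rightarrow> int) \<Rightarrow> (gd \<Rightarrow> int)" where
  "Imap f = (\<lambda>E. \<Sum>D\<in>{D. f D \<noteq> 0}. if E \<subseteq> D then f D else 0)"

text \<open>Relations defining P: identification of homeomorphic diagrams (passing from
  representatives to the free group on the set of diagrams) and the images under I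
  of Reidemeister moves (the Polyak relations, through which I descends to Z[K] -> P).\<close>
inductive_set prel :: "(gd \<Rightarrow> int) set" where
  homeo: "wf_gd D \<Longrightarrow> gd_equiv D D' \<Longrightarrow> gen D - gen D' \<in> prel"
| reidm: "reid D D' \<Longrightarrow> Imap (gen D) - Imap (gen D') \<in> prel"
| zero: "0 \<in> prel"
| add: "f \<in> prel \<Longrightarrow> g \<in> prel \<Longrightarrow> f + g \<in> prel"
| neg: "f \<in> prel \<Longrightarrow> - f \<in> prel"

definition polyak_eq :: "(gd \<Rightarrow> int) \<Rightarrow> (gd \<Rightarrow> int) \<Rightarrow> bool" where
  "polyak_eq f g \<longleftrightarrow> f - g \<in> prel"

section \<open>Discrete derivatives on Z^m (vectors as nat => int, coordinates i < m)\<close>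

definition dstep :: "nat \<Rightarrow> bool \<Rightarrow> ((nat \<Rightarrow> int) \<Rightarrow> (gd \<Rightarrow> int)) \<Rightarrow> ((nat \<Rightarrow> int) \<Rightarrow> (gd \<Rightarrow> int))" where
  "dstep i pos F = (if pos then (\<lambda>z. F (z(i := z i + 1)) - F z)
                            else (\<lambda>z. F z - F (z(i := z i - 1))))"

fun dpart :: "nat \<Rightarrow> (nat \<Rightarrow> bool) \<Rightarrow> (nat \<Rightarrow> nat) \<Rightarrow>
      ((nat \<Rightarrow> int) \<Rightarrow> (gd \<Rightarrow> int)) \<Rightarrow> ((nat \<Rightarrow> int) \<Rightarrow> (gd \<Rightarrow> int))" where
  "dpart 0 nu alpha F = F"
| "dpart (Suc i) nu alpha F = (dstep i (nu i) ^^ alpha i) (dpart i nu alpha F)"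

text \<open>A pair (A, A') of open intervals is given as (l, r, l', r'), A = ]l,r[, A' = ]l',r'[.\<close>
definition pairset :: "real \<times> real \<times> real \<times> real \<Rightarrow> real set" where
  "pairset P = (case P of (l, r, l', r') \<Rightarrow> {l<..<r} \<union> {l'<..<r'})"

text \<open>Y = True means S, False means B; Z = True means R (right), False means L.\<close>
definition twist_config :: "bool \<Rightarrow> bool \<Rightarrow> real \<times> real \<times> real \<times> real \<Rightarrow> int \<Rightarrow> gd \<Rightarrow> bool" where
  "twist_config Y Z P k C \<longleftrightarrow> (case P of (l, r, l', r') \<Rightarrow>
     (\<exists>a b :: nat \<Rightarrow> real.
        strict_mono_on {..<nat \<bar>k\<bar>} a \<and> strict_mono_on {..<nat \<bar>k\<bar>} b \<and>
        (\<forall>j < nat \<bar>k\<bar>. a j \<in> {l<..<r} \<and> b j \<in> {l'<..<r'}) \<and>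
        C = (\<lambda>j. let bj = b (if Y then j else nat \<bar>k\<bar> - 1 - j);
                     right = (if k \<ge> 0 then Z else \<not> Z)
                 in if right then (a j, bj, k \<ge> 0) else (bj, a j, k \<ge> 0)) ` {..<nat \<bar>k\<bar>}))"

definition is_ftl :: "nat \<Rightarrow> ((nat \<Rightarrow> int) \<Rightarrow> gd) \<Rightarrow> bool" where
  "is_ftl m Phi \<longleftrightarrow> (\<exists>G (P :: nat \<Rightarrow> real \<times> real \<times> real \<times> real) Y Z.
     wf_gd G \<and>
     (\<forall>i<m. case P i of (l, r, l', r') \<Rightarrow> l < r \<and> r \<le> l' \<and> l' < r') \<and>
     (\<forall>i<m. \<forall>j<m. i \<noteq> j \<longrightarrow> pairset (P i) \<inter> pairset (P j) = {}) \<and>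
     (\<forall>i<m. ends G \<inter> pairset (P i) = {}) \<and>
     (\<forall>k. \<exists>C. (\<forall>i<m. twist_config (Y i) (Z i) (P i) (k i) (C i)) \<and>
             Phi k = G \<union> (\<Union>i<m. C i)))"

end

theory Submission
  imports Defs
begin

lemma Imap_cong_sum:
  assumes "finite S" "{D. f D \<noteq> 0} \<subseteq> S"
  shows "Imap f E = (\<Sum>D\<in>S. if E \<subseteq> D then f D else 0)"
  unfolding Imap_def
  by (rule sum.mono_neutral_left[OF assms]) auto

lemma Imap_diff:
  assumes "finite {D. f D \<noteq> 0}" "finite {D. g D \<noteq> 0}"
  shows "Imap (f - g) = Imap f - Imap g"
proof
  fix E
  let ?S = "{D. f D \<noteq> 0} \<union> {D. g D \<noteq> 0}"
  have fin: "finite ?S" using assms by auto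
  have "Imap (f - g) E = (\<Sum>D\<in>?S. if E \<subseteq> D then (f - g) D else 0)"
    by (rule Imap_cong_sum[OF fin]) auto
  also have "\<dots> = (\<Sum>D\<in>?S. (if E \<subseteq> D then f D else 0) - (if E \<subseteq> D then g D else 0))"
    by (rule sum.cong) auto
  also have "\<dots> = (\<Sum>D\<in>?S. if E \<subseteq> D then f D else 0) - (\<Sum>D\<in>?S. if E \<subseteq> D then g D else 0)"
    by (simp add: sum_subtractf)
  also have "\<dots> = Imap f E - Imap g E"
    using Imap_cong_sum[OF fin, of f E] Imap_cong_sum[OF fin, of g E] by auto
  finally show "Imap (f - g) E = (Imap f - Imap g) E" by simp
qed

lemma Imap_gen: "Imap (gen X) = (\<lambda>E. if E \<subseteq> X then 1 else 0)"
proof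
  fix E
  have "Imap (gen X) E = (\<Sum>D\<in>{X}. if E \<subseteq> D then gen X D else 0)"
    by (rule Imap_cong_sum) (auto simp: gen_def)
  then show "Imap (gen X) E = (if E \<subseteq> X then 1 else 0)" by (simp add: gen_def)
qed

lemma fin_diff:
  assumes "finite {E. a E \<noteq> (0::int)}" "finite {E. b E \<noteq> 0}"
  shows "finite {E. (a - b) E \<noteq> 0}"
  by (rule finite_subset[of _ "{E. a E \<noteq> 0} \<union> {E. b E \<noteq> 0}"]) (use assms in auto)

lemma fin_dpart:
  assumes "\<And>z. finite {E. F z E \<noteq> 0}"
  shows "finite {E. dpart n nu (\<lambda>_. 1) F z E \<noteq> 0}"
proof (induction n arbitrary: z)
  case 0 then show ?case using assms by simp
next
  case (Suc n)
  have "finite {E. (dpart n nu (\<lambda>_. 1) F a - dpart n nu (\<lambda>_. 1) F b) E \<noteq> 0}" for a b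
    by (rule fin_diff) (rule Suc.IH)+
  then show ?case
    by (cases "nu n") (simp_all add: dstep_def)
qed

lemma ind_step:
  assumes "a \<notin> Dn" "a \<notin> R"
  shows "(if Dn \<subseteq> E \<and> E \<subseteq> Dn \<union> insert a R then 1 else 0) - (if Dn \<subseteq> E \<and> E \<subseteq> Dn \<union> R then 1 else 0)
       = (if insert a Dn \<subseteq> E \<and> E \<subseteq> insert a Dn \<union> R then (1::int) else 0)"
  using assms by (cases "a \<in> E") auto

lemma lin1: "(X::int) - Y = W \<Longrightarrow> c * X - c * Y = c * W"
  by (simp add: right_diff_distrib[symmetric])

lemma lin2: "(X::int) - Y = W \<Longrightarrow> c * Y - c * X = - c * W"
  by (simp add: algebra_simps)

theorem lemma6:
  fixes D :: gd and m :: nat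
  assumes "wf_gd D" and "card D = m" and "m > 0"
  shows "\<exists>Phi alpha nu. is_ftl m Phi \<and>
     polyak_eq (Imap (dpart m nu alpha (\<lambda>z. gen (Phi z)) (\<lambda>_. 0)))
               (\<lambda>E. (-1::int) ^ card {a\<in>D. \<not> sg_of a} * gen D E)"
proof -
  have finD: "finite D" using assms(1) by (simp add: wf_gd_def)
  obtain f where bij: "bij_betw f {..<m} D"
    using ex_bij_betw_nat_finite[OF finD] assms(2) by (auto simp: atLeast0LessThan)
  have fD: "f i \<in> D" if "i < m" for i using bij that by (auto simp: bij_betw_def)
  have finj: "inj_on f {..<m}" using bij by (simp add: bij_betw_def)
  have fim: "f ` {..<m} = D" using bij by (simp add: bij_betw_def)
  have tlhd: "tl_of (f i) \<noteq> hd_of (f i)" if "i < m" for i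
    using assms(1) fD[OF that] by (auto simp: wf_gd_def)
  have disj: "{tl_of (f i), hd_of (f i)} \<inter> {tl_of (f j), hd_of (f j)} = {}"
    if "i < m" "j < m" "i \<noteq> j" for i j
  proof -
    have "f i \<noteq> f j" using finj that by (auto dest: inj_onD)
    then show ?thesis using assms(1) fD that by (auto simp: wf_gd_def)
  qed
  have finE: "finite (ends D)" using finD by (simp add: ends_def)
  define DS where "DS = (\<lambda>(p, q). \<bar>p - q\<bar>) ` {(p, q). p \<in> ends D \<and> q \<in> ends D \<and> p \<noteq> q}"
  have finDS: "finite DS" unfolding DS_def
    by (rule finite_imageI, rule finite_subset[of _ "ends D \<times> ends D"]) (use finE in auto)
  define dd where "dd = Min (insert 1 DS)"
  have ddpos: "dd > 0" unfolding dd_def using finDS by (auto simp: DS_def)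
  have ddle: "dd \<le> \<bar>p - q\<bar>" if "p \<in> ends D" "q \<in> ends D" "p \<noteq> q" for p q
    unfolding dd_def using finDS that by (intro Min_le) (auto simp: DS_def)
  define \<delta> where "\<delta> = dd / 3"
  have dpos: "\<delta> > 0" using ddpos by (simp add: \<delta>_def)
  have sep: "3 * \<delta> \<le> \<bar>p - q\<bar>" if "p \<in> ends D" "q \<in> ends D" "p \<noteq> q" for p q
    using ddle[OF that] by (simp add: \<delta>_def)
  define x where "x = (\<lambda>i. min (tl_of (f i)) (hd_of (f i)))"
  define y where "y = (\<lambda>i. max (tl_of (f i)) (hd_of (f i)))"
  have xyE: "x i \<in> ends D" "y i \<in> ends D" if "i < m" for i
    using fD[OF that] by (auto simp: x_def y_def ends_def min_def max_def)
  have xy: "x i < y i" if "i < m" for i using tlhd[OF that] by (auto simp: x_def y_def)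
  have xy3: "x i + \<delta> \<le> y i - \<delta>" if "i < m" for i
    using sep[OF xyE[OF that] less_imp_neq[OF xy[OF that]]] xy[OF that] dpos by auto
  have xyset: "{x i, y i} = {tl_of (f i), hd_of (f i)}" for i
    by (auto simp: x_def y_def min_def max_def)
  define P where "P = (\<lambda>i. (x i - \<delta>, x i + \<delta>, y i - \<delta>, y i + \<delta>))"
  have psP: "pairset (P i) = {x i - \<delta><..<x i + \<delta>} \<union> {y i - \<delta><..<y i + \<delta>}" for i
    by (simp add: pairset_def P_def)
  have pdisj: "pairset (P i) \<inter> pairset (P j) = {}" if "i < m" "j < m" "i \<noteq> j" for i j
  proof (rule ccontr)
    assume "pairset (P i) \<inter> pairset (P j) \<noteq> {}"
    then obtain p where p: "p \<in> pairset (P i)" "p \<in> pairset (P j)" by blast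
    have near: "\<exists>c\<in>{x l, y l}. \<bar>p - c\<bar> < \<delta>" if "p \<in> pairset (P l)" for l
    proof -
      have "(x l - \<delta> < p \<and> p < x l + \<delta>) \<or> (y l - \<delta> < p \<and> p < y l + \<delta>)"
        using that by (auto simp: psP)
      then show ?thesis
      proof
        assume "x l - \<delta> < p \<and> p < x l + \<delta>"
        then have "\<bar>p - x l\<bar> < \<delta>" by linarith
        then show ?thesis by blast
      next
        assume "y l - \<delta> < p \<and> p < y l + \<delta>"
        then have "\<bar>p - y l\<bar> < \<delta>" by linarith
        then show ?thesis by blast
      qed
    qed
    obtain c where c: "c \<in> {x i, y i}" "\<bar>p - c\<bar> < \<delta>" using near[OF p(1)] by blast
    obtain c' where c': "c' \<in> {x j, y j}" "\<bar>p - c'\<bar> < \<delta>" using near[OF p(2)] by blast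
    have "c \<noteq> c'" using disj[OF that] c(1) c'(1) unfolding xyset by auto
    moreover have "c \<in> ends D" "c' \<in> ends D" using c(1) c'(1) xyE that by auto
    ultimately have "3 * \<delta> \<le> \<bar>c - c'\<bar>" using sep by blast
    then show False using c(2) c'(2) dpos by linarith
  qed
  define pos where "pos = (\<lambda>j::nat. \<delta> * real j / (real j + 1))"
  have pos0: "pos 0 = 0" by (simp add: pos_def)
  have posb: "0 \<le> pos j \<and> pos j < \<delta>" for j
    using dpos by (simp add: pos_def field_simps)
  have posb2: "- \<delta> < pos j" for j using posb[of j] dpos by linarith
  have posm: "strict_mono pos"
  proof (rule strict_monoI)
    fix j k :: nat assume "j < k"
    then have "real j * (real k + 1) < real k * (real j + 1)" by (simp add: algebra_simps)
    then have "real j / (real j + 1) < real k / (real k + 1)"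
      by (simp add: field_simps)
    then have "\<delta> * (real j / (real j + 1)) < \<delta> * (real k / (real k + 1))"
      using dpos by (rule mult_strict_left_mono)
    then show "pos j < pos k" by (simp add: pos_def)
  qed
  define a where "a = (\<lambda>i j. x i + pos j)"
  define b where "b = (\<lambda>i j. y i + pos j)"
  define Z where "Z = (\<lambda>i. sg_of (f i) = (tl_of (f i) < hd_of (f i)))"
  define cfg where "cfg = (\<lambda>i (k::int). (\<lambda>j. let bj = b i (if True then j else nat \<bar>k\<bar> - 1 - j);
                     right = (if k \<ge> 0 then Z i else \<not> Z i)
                 in if right then (a i j, bj, k \<ge> 0) else (bj, a i j, k \<ge> 0)) ` {..<nat \<bar>k\<bar>})"
  define Phi where "Phi = (\<lambda>k. {} \<union> (\<Union>i<m. cfg i (k i)))"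
  have abP: "a i j \<in> pairset (P i)" "b i j \<in> pairset (P i)" for i j
    using posb[of j] dpos by (auto simp: psP a_def b_def)
  have cfgP: "tl_of c \<in> pairset (P i)" if "c \<in> cfg i k" for i k c
    using that abP by (auto simp: cfg_def Let_def tl_of_def)
  have fP: "tl_of (f i) \<in> pairset (P i)" for i
  proof -
    have "tl_of (f i) \<in> {x i, y i}" unfolding xyset by simp
    then show ?thesis using dpos by (auto simp: psP)
  qed
  have fnot: "f i \<notin> cfg j k" if "i < m" "j < m" "i \<noteq> j" for i j k
    using cfgP[of "f i" j k] fP[of i] pdisj[OF that] by auto
  have cfg0: "cfg i 0 = {}" for i by (simp add: cfg_def)
  define s where "s = (\<lambda>i. if sg_of (f i) then 1 else (-1::int))"
  have cfgs: "cfg i (s i) = {f i}" if "i < m" for i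
  proof -
    obtain t h g where fi: "f i = (t, h, g)" by (cases "f i")
    have "t \<noteq> h" using tlhd[OF that] fi by (simp add: tl_of_def hd_of_def)
    then show ?thesis
      by (cases g; cases "t < h")
         (auto simp: cfg_def s_def fi sg_of_def tl_of_def hd_of_def Z_def a_def b_def x_def y_def pos0 Let_def)
  qed
  have ftl: "is_ftl m Phi"
    unfolding is_ftl_def
  proof (rule exI[of _ "{}"], rule exI[of _ P], rule exI[of _ "\<lambda>_. True"], rule exI[of _ Z], intro conjI allI impI)
    show "wf_gd {}" by (simp add: wf_gd_def)
    show "case P i of (l, r, l', r') \<Rightarrow> l < r \<and> r \<le> l' \<and> l' < r'" if "i < m" for i
      using xy3[OF that] dpos by (simp add: P_def)
    show "pairset (P i) \<inter> pairset (P j) = {}" if "i < m" "j < m" "i \<noteq> j" for i j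
      using pdisj that by blast
    show "ends {} \<inter> pairset (P i) = {}" for i by (simp add: ends_def)
    fix k :: "nat \<Rightarrow> int"
    show "\<exists>C. (\<forall>i<m. twist_config True (Z i) (P i) (k i) (C i)) \<and> Phi k = {} \<union> (\<Union>i<m. C i)"
    proof (intro exI[of _ "\<lambda>i. cfg i (k i)"] conjI allI impI)
      show "Phi k = {} \<union> (\<Union>i<m. cfg i (k i))" by (simp add: Phi_def)
      fix i assume "i < m"
      show "twist_config True (Z i) (P i) (k i) (cfg i (k i))"
        unfolding twist_config_def P_def prod.case
        apply (rule exI[of _ "a i"], rule exI[of _ "b i"])
        using posm abP dpos posb posb2
        by (auto simp: strict_mono_on_def strict_mono_def a_def b_def cfg_def P_def)
    qed
  qed
  define nu where "nu = (\<lambda>i. sg_of (f i))"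
  define alpha where "alpha = (\<lambda>_::nat. 1::nat)"
  define Fg where "Fg = (\<lambda>z. gen (Phi z))"
  define R where "R = (\<lambda>n (z::nat \<Rightarrow> int). \<Union>i\<in>{n..<m}. cfg i (z i))"
  define sig where "sig = (\<lambda>n. (-1::int) ^ card {i\<in>{..<n}. \<not> sg_of (f i)})"
  have finF: "finite {E. Fg z E \<noteq> 0}" for z by (simp add: Fg_def gen_def)
  have finA: "finite {E. dpart n nu alpha Fg z E \<noteq> 0}" for n z
    unfolding alpha_def by (rule fin_dpart[OF finF])
  have Rsplit: "R n z = cfg n (z n) \<union> R (Suc n) z" if "n < m" for n z
  proof -
    have "{n..<m} = insert n {Suc n..<m}" using that by auto
    then show ?thesis by (simp add: R_def)
  qed
  have Rupd: "R (Suc n) (z(n := v)) = R (Suc n) z" for n z v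
    by (simp add: R_def)
  have fnotR: "f n \<notin> R (Suc n) z" if "n < m" for n z
    using fnot[of n] that by (auto simp: R_def)
  have fnotD: "f n \<notin> f ` {..<n}" if "n < m" for n
    using finj that by (auto dest: inj_onD)
  have claim: "n \<le> m \<Longrightarrow> (\<forall>i<n. z i = 0) \<Longrightarrow>
     Imap (dpart n nu alpha Fg z) = (\<lambda>E. sig n * (if f ` {..<n} \<subseteq> E \<and> E \<subseteq> f ` {..<n} \<union> R n z then 1 else 0))"
    for n z
  proof (induction n arbitrary: z)
    case 0
    have "Phi z = R 0 z" by (auto simp: Phi_def R_def)
    then show ?case by (simp add: Fg_def Imap_gen sig_def)
  next
    case (Suc n)
    have nm: "n < m" using Suc.prems by simp
    have zn: "z n = 0" using Suc.prems by simp
    let ?A = "dpart n nu alpha Fg"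
    have IH: "Imap (?A w) = (\<lambda>E. sig n * (if f ` {..<n} \<subseteq> E \<and> E \<subseteq> f ` {..<n} \<union> R n w then 1 else 0))"
      if "\<forall>i<n. w i = 0" for w
      using Suc.IH[OF _ that] Suc.prems by simp
    have Rz: "R n z = R (Suc n) z" using Rsplit[OF nm, of z] zn cfg0 by simp
    have Rs: "R n (z(n := s n)) = insert (f n) (R (Suc n) z)"
      using Rsplit[OF nm, of "z(n := s n)"] Rupd cfgs[OF nm] by simp
    have Dsuc: "f ` {..<Suc n} = insert (f n) (f ` {..<n})" by (simp add: lessThan_Suc)
    have z0: "\<forall>i<n. z i = 0" "\<forall>i<n. (z(n := s n)) i = 0" using Suc.prems by auto
    show ?case
    proof (cases "sg_of (f n)")
      case True
      have sn: "s n = 1" using True by (simp add: s_def)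
      have zz: "z(n := z n + 1) = z(n := s n)" using zn sn by simp
      have "dpart (Suc n) nu alpha Fg z = ?A (z(n := s n)) - ?A z"
        using True by (simp add: alpha_def nu_def dstep_def zz)
      then have "Imap (dpart (Suc n) nu alpha Fg z) = Imap (?A (z(n := s n))) - Imap (?A z)"
        using Imap_diff[OF finA finA] by simp
      also have "\<dots> = (\<lambda>E. sig (Suc n) * (if f ` {..<Suc n} \<subseteq> E \<and> E \<subseteq> f ` {..<Suc n} \<union> R (Suc n) z then 1 else 0))"
      proof
        fix E
        have "{i\<in>{..<Suc n}. \<not> sg_of (f i)} = {i\<in>{..<n}. \<not> sg_of (f i)}"
          using True less_Suc_eq by auto
        then have sg: "sig (Suc n) = sig n"
          by (simp add: sig_def)
        show "(Imap (?A (z(n := s n))) - Imap (?A z)) E = sig (Suc n) * (if f ` {..<Suc n} \<subseteq> E \<and> E \<subseteq> f ` {..<Suc n} \<union> R (Suc n) z then 1 else 0)"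
          (is "_ = ?r")
        proof -
          have e1: "Imap (?A (z(n := s n))) E = sig n * (if f ` {..<n} \<subseteq> E \<and> E \<subseteq> f ` {..<n} \<union> insert (f n) (R (Suc n) z) then 1 else 0)"
            using fun_cong[OF IH[OF z0(2)], of E] unfolding Rs .
          have e2: "Imap (?A z) E = sig n * (if f ` {..<n} \<subseteq> E \<and> E \<subseteq> f ` {..<n} \<union> R (Suc n) z then 1 else 0)"
            using fun_cong[OF IH[OF z0(1)], of E] unfolding Rz .
          show ?thesis
          unfolding minus_apply e1 e2 sg Dsuc
          by (rule lin1[OF ind_step[OF fnotD[OF nm] fnotR[OF nm, of z], of E]])
        qed
      qed
      finally show ?thesis .
    next
      case False
      have sn: "s n = -1" using False by (simp add: s_def)
      have zz: "z(n := z n - 1) = z(n := s n)" using zn sn by simp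
      have "dpart (Suc n) nu alpha Fg z = ?A z - ?A (z(n := s n))"
        using False by (simp add: alpha_def nu_def dstep_def zz)
      then have "Imap (dpart (Suc n) nu alpha Fg z) = Imap (?A z) - Imap (?A (z(n := s n)))"
        using Imap_diff[OF finA finA] by simp
      also have "\<dots> = (\<lambda>E. sig (Suc n) * (if f ` {..<Suc n} \<subseteq> E \<and> E \<subseteq> f ` {..<Suc n} \<union> R (Suc n) z then 1 else 0))"
      proof
        fix E
        have "{i\<in>{..<Suc n}. \<not> sg_of (f i)} = insert n {i\<in>{..<n}. \<not> sg_of (f i)}"
          using False by auto
        then have sg: "sig (Suc n) = - sig n"
          by (simp add: sig_def)
        show "(Imap (?A z) - Imap (?A (z(n := s n)))) E = sig (Suc n) * (if f ` {..<Suc n} \<subseteq> E \<and> E \<subseteq> f ` {..<Suc n} \<union> R (Suc n) z then 1 else 0)"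
          (is "_ = ?r")
        proof -
          have e1: "Imap (?A (z(n := s n))) E = sig n * (if f ` {..<n} \<subseteq> E \<and> E \<subseteq> f ` {..<n} \<union> insert (f n) (R (Suc n) z) then 1 else 0)"
            using fun_cong[OF IH[OF z0(2)], of E] unfolding Rs .
          have e2: "Imap (?A z) E = sig n * (if f ` {..<n} \<subseteq> E \<and> E \<subseteq> f ` {..<n} \<union> R (Suc n) z then 1 else 0)"
            using fun_cong[OF IH[OF z0(1)], of E] unfolding Rz .
          show ?thesis
          unfolding minus_apply e1 e2 sg Dsuc
          by (rule lin2[OF ind_step[OF fnotD[OF nm] fnotR[OF nm, of z], of E]])
        qed
      qed
      finally show ?thesis .
    qed
  qed
  have fin: "Imap (dpart m nu alpha Fg (\<lambda>_. 0)) = (\<lambda>E. (-1::int) ^ card {a\<in>D. \<not> sg_of a} * gen D E)"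
  proof -
    have "R m (\<lambda>_. 0) = {}" by (simp add: R_def)
    moreover have "{a\<in>D. \<not> sg_of a} = f ` {i\<in>{..<m}. \<not> sg_of (f i)}" using fim by auto
    then have "card {a\<in>D. \<not> sg_of a} = card {i\<in>{..<m}. \<not> sg_of (f i)}"
    proof -
      have "inj_on f {i\<in>{..<m}. \<not> sg_of (f i)}" by (rule inj_on_subset[OF finj]) auto
      then show ?thesis using \<open>{a\<in>D. \<not> sg_of a} = f ` {i\<in>{..<m}. \<not> sg_of (f i)}\<close>
        by (simp add: card_image)
    qed
    ultimately show ?thesis
      using claim[of m "\<lambda>_. 0"] fim by (auto simp: sig_def gen_def fun_eq_iff)
  qed
  show ?thesis
    apply (rule exI[of _ Phi], rule exI[of _ alpha], rule exI[of _ nu])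
    using ftl fin by (simp add: Fg_def polyak_eq_def prel.zero)
qed

end
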